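(* Let $\Gamma$ be a finite simple graph, let $g\in G(\Gamma)$ be non-split and cyclically reduced, and let $v_0\in\mathrm{supp}(g)$. Then there exist a $v_0$-conical element $p\in G(\Gamma)$ and elements $a,b\in G(\Gamma)$ such that $$g=apa^{-1}=b^{-1}pb,$$ where $g^k=ab$ holds and is a geodesic decomposition for some $0\le k\le |V(\Gamma)|-1$. In particular, if $n\ge|V(\Gamma)|$, then $g^n=ap^{n-k}b$ is a geodesic decomposition (i.e. $|g^n|=|a|+(n-k)|p|+|b|$).
   Context: $G(\Gamma)=\langle v\in V(\Gamma)\mid [v_i,v_j]=1 \text{ if } \{v_i,v_j\}\notin E(\Gamma)\rangle$. $|g|$ is word length with respect to $V(\Gamma)$; a reduced word is a shortest representative. $\mathrm{supp}(g)$ is the set of generators $v$ such that $v^{\pm1}$ appears in a reduced word for $g$. $g$ is non-split if $\mathrm{supp}(g)$ spans a connected subgraph of $\Gamma$. $g$ is cyclically reduced if it has minimal word length in its conjugacy class. A decomposition $g=g_1\cdots g_k$ is geodesic if $|g|=\sum|g_i|$. The set of starting generators $S(g)$ is the set of $v\in V(\Gamma)$ such that $g=v^{\epsilon}h$ is geodesic for some $\epsilon=\pm1$ and $h\in G(\Gamma)$. $g$ is $v_0$-conical if $S(g)=\{v_0\}$. *)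

theory Defs
  imports Main "HOL-Library.Cardinality"
begin

text \<open>Elements of G(Gamma) are represented by words over the generators.
  The vertex set of Gamma is the whole finite type 'v; E is the (symmetric,
  irreflexive) edge relation.  A letter (v, True) is v, (v, False) is v^-1.
  Generators commute iff they are NOT joined by an edge (paper's convention).\<close>

type_synonym 'v word = "('v \<times> bool) list"

definition inv_letter :: "'v \<times> bool \<Rightarrow> 'v \<times> bool" where
  "inv_letter x = (fst x, \<not> snd x)"

definition inv_word :: "'v word \<Rightarrow> 'v word" where
  "inv_word w = rev (map inv_letter w)"

definition pow_word :: "'v word \<Rightarrow> nat \<Rightarrow> 'v word" where
  "pow_word w n = concat (replicate n w)"

inductive raag_step :: "('v \<Rightarrow> 'v \<Rightarrow> bool) \<Rightarrow> 'v word \<Rightarrow> 'v word \<Rightarrow> bool"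
  for E where
  cancel: "raag_step E (u @ [x, inv_letter x] @ w) (u @ w)"
| insert: "raag_step E (u @ w) (u @ [x, inv_letter x] @ w)"
| commute: "\<not> E (fst x) (fst y) \<Longrightarrow> raag_step E (u @ [x, y] @ w) (u @ [y, x] @ w)"

definition geq :: "('v \<Rightarrow> 'v \<Rightarrow> bool) \<Rightarrow> 'v word \<Rightarrow> 'v word \<Rightarrow> bool" where
  "geq E w1 w2 = (raag_step E)\<^sup>*\<^sup>* w1 w2"

definition wlen :: "('v \<Rightarrow> 'v \<Rightarrow> bool) \<Rightarrow> 'v word \<Rightarrow> nat" where
  "wlen E g = (LEAST n. \<exists>w. geq E g w \<and> length w = n)"

definition reduced_word_for :: "('v \<Rightarrow> 'v \<Rightarrow> bool) \<Rightarrow> 'v word \<Rightarrow> 'v word \<Rightarrow> bool" where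
  "reduced_word_for E w g = (geq E w g \<and> length w = wlen E g)"

definition supp :: "('v \<Rightarrow> 'v \<Rightarrow> bool) \<Rightarrow> 'v word \<Rightarrow> 'v set" where
  "supp E g = {v. \<exists>w. reduced_word_for E w g \<and> v \<in> fst ` set w}"

definition connected_span :: "('v \<Rightarrow> 'v \<Rightarrow> bool) \<Rightarrow> 'v set \<Rightarrow> bool" where
  "connected_span E S =
     (\<forall>u\<in>S. \<forall>v\<in>S. (\<lambda>x y. E x y \<and> x \<in> S \<and> y \<in> S)\<^sup>*\<^sup>* u v)"

definition non_split :: "('v \<Rightarrow> 'v \<Rightarrow> bool) \<Rightarrow> 'v word \<Rightarrow> bool" where
  "non_split E g = connected_span E (supp E g)"

definition cyclically_reduced :: "('v \<Rightarrow> 'v \<Rightarrow> bool) \<Rightarrow> 'v word \<Rightarrow> bool" where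
  "cyclically_reduced E g = (\<forall>c. wlen E g \<le> wlen E (c @ g @ inv_word c))"

definition start_gens :: "('v \<Rightarrow> 'v \<Rightarrow> bool) \<Rightarrow> 'v word \<Rightarrow> 'v set" where
  "start_gens E g = {v. \<exists>\<epsilon> h. geq E g ((v, \<epsilon>) # h) \<and> wlen E g = 1 + wlen E h}"

definition conical :: "('v \<Rightarrow> 'v \<Rightarrow> bool) \<Rightarrow> 'v \<Rightarrow> 'v word \<Rightarrow> bool" where
  "conical E v0 p = (start_gens E p = {v0})"

end

theory Submission
  imports Defs
begin



datatype bead = Bd bool | Sep

fun adj_ok :: "bead list \<Rightarrow> bool" where
  "adj_ok (Bd a # Bd b # l) = (a = b \<and> adj_ok (Bd b # l))"
| "adj_ok (Sep # l) = adj_ok l"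
| "adj_ok (Bd a # Sep # l) = adj_ok (Sep # l)"
| "adj_ok [Bd a] = True"
| "adj_ok [] = True"

lemma adj_ok_Cons: "adj_ok (x # l) \<longleftrightarrow> adj_ok l \<and> (\<forall>a. x = Bd a \<longrightarrow> l = [] \<or> hd l \<noteq> Bd (\<not> a))"
  by (cases x; cases l; (cases "hd l")?; auto)

lemma adj_ok_append: "adj_ok (xs @ ys) \<longleftrightarrow> adj_ok xs \<and> adj_ok ys \<and>
   \<not> (xs \<noteq> [] \<and> ys \<noteq> [] \<and> (\<exists>a. last xs = Bd a \<and> hd ys = Bd (\<not> a)))"
  by (induction xs) (auto simp: adj_ok_Cons)

lemma inv_inv[simp]: "inv_letter (inv_letter x) = x" by (cases x) (simp add: inv_letter_def)
lemma fst_inv[simp]: "fst (inv_letter x) = fst x" by (simp add: inv_letter_def)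
lemma snd_inv[simp]: "snd (inv_letter x) = (\<not> snd x)" by (simp add: inv_letter_def)
lemma inv_word_Cons[simp]: "inv_word (x # w) = inv_word w @ [inv_letter x]" by (simp add: inv_word_def)
lemma inv_word_Nil[simp]: "inv_word [] = []" by (simp add: inv_word_def)
lemma inv_word_append: "inv_word (u @ w) = inv_word w @ inv_word u" by (simp add: inv_word_def)

lemma pow_word_0[simp]: "pow_word r 0 = []" by (simp add: pow_word_def)
lemma pow_word_Suc: "pow_word r (Suc n) = r @ pow_word r n" by (simp add: pow_word_def)
lemma pow_word_add: "pow_word r (m + n) = pow_word r m @ pow_word r n"
  by (simp add: pow_word_def replicate_add)
lemma pow_word_Suc': "pow_word r (Suc n) = pow_word r n @ r"
  using pow_word_add[of r n 1] by (simp add: pow_word_def)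
lemma length_pow_word[simp]: "length (pow_word r n) = n * length r"
  by (induction n) (simp_all add: pow_word_Suc)
lemma nth_pow_word: "i < n * length r \<Longrightarrow> pow_word r n ! i = r ! (i mod length r)"
proof (induction n arbitrary: i)
  case 0 then show ?case by simp
next
  case (Suc n)
  show ?case
  proof (cases "i < length r")
    case True then show ?thesis by (simp add: pow_word_Suc nth_append)
  next
    case False
    then have "i - length r < n * length r" using Suc.prems by auto
    then show ?thesis using False Suc.IH[of "i - length r"]
      by (simp add: pow_word_Suc nth_append mod_if)
  qed
qed

locale raag =
  fixes E :: "'v::finite \<Rightarrow> 'v \<Rightarrow> bool"
  assumes symE: "E x y \<Longrightarrow> E y x"
begin

lemma step_sym: "raag_step E a b \<Longrightarrow> raag_step E b a"
proof (induction rule: raag_step.induct)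
  case (cancel u x w) show ?case by (rule raag_step.insert)
next
  case (insert u w x) show ?case by (rule raag_step.cancel)
next
  case (commute x y u w) then show ?case using raag_step.commute[of E y x u w] symE by blast
qed

lemma geq_refl[simp]: "geq E a a" by (simp add: geq_def)
lemma geq_trans: "geq E a b \<Longrightarrow> geq E b c \<Longrightarrow> geq E a c"
  unfolding geq_def by (rule rtranclp_trans)
lemma geq_sym: "geq E a b \<Longrightarrow> geq E b a"
  unfolding geq_def
  by (induction rule: rtranclp_induct) (auto intro: converse_rtranclp_into_rtranclp step_sym)

lemma step_ctx: "raag_step E a b \<Longrightarrow> raag_step E (X @ a @ Y) (X @ b @ Y)"
proof (induction rule: raag_step.induct)
  case (cancel u x w)
  then show ?case using raag_step.cancel[of E "X @ u" x "w @ Y"] by simp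
next
  case (insert u w x)
  then show ?case using raag_step.insert[of E "X @ u" "w @ Y" x] by simp
next
  case (commute x y u w)
  then show ?case using raag_step.commute[of E x y "X @ u" "w @ Y"] by simp
qed

lemma geq_ctx: "geq E a b \<Longrightarrow> geq E (X @ a @ Y) (X @ b @ Y)"
  unfolding geq_def
  by (induction rule: rtranclp_induct) (auto intro: rtranclp.rtrancl_into_rtrancl step_ctx)

lemma geq_app: "geq E a b \<Longrightarrow> geq E c d \<Longrightarrow> geq E (a @ c) (b @ d)"
  using geq_ctx[of a b "[]" c] geq_ctx[of c d b "[]"] by (auto intro: geq_trans)

lemma geq_Cons: "geq E a b \<Longrightarrow> geq E (x # a) (x # b)"
  using geq_ctx[of a b "[x]" "[]"] by simp

lemma geq_cancel: "geq E (X @ [x, inv_letter x] @ Y) (X @ Y)"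
  unfolding geq_def by (rule r_into_rtranclp) (rule raag_step.cancel)

lemma geq_inv_r: "geq E (w @ inv_word w) []"
proof (induction w)
  case Nil then show ?case by simp
next
  case (Cons x w)
  have "geq E ([x] @ (w @ inv_word w) @ [inv_letter x]) ([x] @ [] @ [inv_letter x])"
    by (rule geq_ctx[OF Cons])
  moreover have "geq E ([] @ [x, inv_letter x] @ []) ([] @ [])" by (rule geq_cancel)
  ultimately show ?case by (auto intro: geq_trans)
qed

lemma geq_inv_l: "geq E (inv_word w @ w) []"
proof (induction w)
  case Nil then show ?case by simp
next
  case (Cons x w)
  have "geq E (inv_word w @ [inv_letter x, inv_letter (inv_letter x)] @ w) (inv_word w @ w)"
    by (rule geq_cancel)
  then show ?case using Cons by (auto intro: geq_trans)
qed

lemma move_left: "(\<forall>z\<in>set M. \<not> E (fst z) (fst y)) \<Longrightarrow> geq E (X @ M @ y # N) (X @ y # M @ N)"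
proof (induction M arbitrary: X)
  case Nil then show ?case by simp
next
  case (Cons z M)
  have 1: "geq E ((X @ [z]) @ M @ y # N) ((X @ [z]) @ y # M @ N)" using Cons by (meson list.set_intros(2))
  have "raag_step E (X @ [z, y] @ (M @ N)) (X @ [y, z] @ (M @ N))"
    using Cons.prems by (intro raag_step.commute) auto
  then have "geq E (X @ [z, y] @ (M @ N)) (X @ [y, z] @ (M @ N))" by (simp add: geq_def)
  with 1 show ?case by (auto intro: geq_trans)
qed

lemma wlen_le: "geq E g w \<Longrightarrow> wlen E g \<le> length w"
  unfolding wlen_def by (rule Least_le) blast

lemma wlen_ex: "\<exists>w. geq E g w \<and> length w = wlen E g"
  unfolding wlen_def by (rule LeastI_ex) (use geq_refl in blast)

lemma wlen_cong: "geq E g h \<Longrightarrow> wlen E g = wlen E h"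
proof -
  assume h: "geq E g h"
  obtain w1 where w1: "geq E g w1" "length w1 = wlen E g" using wlen_ex by blast
  obtain w2 where w2: "geq E h w2" "length w2 = wlen E h" using wlen_ex by blast
  have "wlen E h \<le> length w1" using w1 h by (intro wlen_le) (auto intro: geq_trans geq_sym)
  moreover have "wlen E g \<le> length w2" using w2 h by (intro wlen_le) (auto intro: geq_trans geq_sym)
  ultimately show ?thesis using w1 w2 by simp
qed

lemma wlen_le_len: "wlen E w \<le> length w" by (rule wlen_le) simp

end



context raag begin

definition rel :: "'v \<Rightarrow> 'v \<times> bool \<Rightarrow> bool" where
  "rel v y \<longleftrightarrow> fst y = v \<or> E v (fst y)"
definition bead :: "'v \<Rightarrow> 'v \<times> bool \<Rightarrow> bead" where
  "bead v y = (if fst y = v then Bd (snd y) else Sep)"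
definition push :: "'v word \<Rightarrow> 'v \<Rightarrow> bead list" where
  "push w v = map (bead v) (filter (rel v) w)"
definition cancel :: "'v \<times> bool \<Rightarrow> ('v \<Rightarrow> bead list) \<Rightarrow> bool" where
  "cancel x \<pi> \<longleftrightarrow> \<pi> (fst x) \<noteq> [] \<and> hd (\<pi> (fst x)) = Bd (\<not> snd x)"
definition act :: "'v \<times> bool \<Rightarrow> ('v \<Rightarrow> bead list) \<Rightarrow> ('v \<Rightarrow> bead list)" where
  "act x \<pi> = (if cancel x \<pi> then (\<lambda>v. if rel v x then tl (\<pi> v) else \<pi> v)
     else (\<lambda>v. if rel v x then bead v x # \<pi> v else \<pi> v))"
definition pil :: "'v word \<Rightarrow> ('v \<Rightarrow> bead list)" where
  "pil w = foldr act w (\<lambda>_. [])"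
definition red :: "'v word \<Rightarrow> bool" where
  "red w \<longleftrightarrow> (\<forall>v. adj_ok (push w v))"

lemma push_Nil[simp]: "push [] v = []" by (simp add: push_def)
lemma push_Cons: "push (x # w) v = (if rel v x then bead v x # push w v else push w v)"
  by (simp add: push_def)
lemma push_append: "push (xs @ ys) v = push xs v @ push ys v" by (simp add: push_def)
lemma pil_Cons[simp]: "pil (x # w) = act x (pil w)" by (simp add: pil_def)
lemma pil_Nil: "pil [] = (\<lambda>_. [])" by (simp add: pil_def)
lemma rel_self[simp]: "rel (fst x) x" by (simp add: rel_def)
lemma rel_inv[simp]: "rel v (inv_letter x) = rel v x" by (simp add: rel_def)
lemma bead_self[simp]: "bead (fst x) x = Bd (snd x)" by (simp add: bead_def)

lemma red_Nil[simp]: "red []" by (simp add: red_def)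

lemma red_tl: "red (y # w) \<Longrightarrow> red w"
  unfolding red_def
proof
  fix v assume "\<forall>v. adj_ok (push (y # w) v)"
  then have "adj_ok (push (y # w) v)" by blast
  then show "adj_ok (push w v)" by (cases "rel v y") (simp_all add: push_Cons adj_ok_Cons)
qed

lemma red_append: "red (xs @ ys) \<Longrightarrow> red xs \<and> red ys"
  unfolding red_def push_append adj_ok_append by simp

lemma red_push_cong: "push a = push b \<Longrightarrow> red a = red b"
  by (simp add: red_def)

lemma canc: "act x (push (inv_letter x # t)) = push t"
proof -
  have c: "cancel x (push (inv_letter x # t))"
    by (simp add: cancel_def push_Cons bead_def)
  show ?thesis unfolding act_def using c by (auto simp: push_Cons)
qed

lemma push_act: "\<not> cancel x (push t) \<Longrightarrow> act x (push t) = push (x # t)"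
  by (auto simp: act_def push_Cons)

lemma sep_comm: "set xs \<subseteq> {c} \<Longrightarrow> xs @ c # ys = c # xs @ ys"
  by (induction xs) auto

lemma nonrel_sep: "(\<forall>z\<in>set w1. \<not> rel u z) \<Longrightarrow> E v u \<Longrightarrow> set (push w1 v) \<subseteq> {Sep}"
proof
  fix b assume h: "\<forall>z\<in>set w1. \<not> rel u z" and e: "E v u" and b: "b \<in> set (push w1 v)"
  then obtain z where z: "z \<in> set w1" "b = bead v z" by (auto simp: push_def)
  have "fst z \<noteq> v"
  proof
    assume "fst z = v"
    then have "rel u z" using e symE by (simp add: rel_def)
    then show False using h z by blast
  qed
  then show "b \<in> {Sep}" using z by (simp add: bead_def)
qed

lemma commute_push: "(\<forall>z\<in>set w1. \<not> rel (fst x) z) \<Longrightarrow> push (w1 @ x # w2) = push (x # w1 @ w2)"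
proof
  fix v
  assume h: "\<forall>z\<in>set w1. \<not> rel (fst x) z"
  show "push (w1 @ x # w2) v = push (x # w1 @ w2) v"
  proof (cases "rel v x")
    case False then show ?thesis by (simp add: push_append push_Cons)
  next
    case True
    show ?thesis
    proof (cases "v = fst x")
      case True
      have "push w1 v = []" using h True by (auto simp: push_def filter_empty_conv)
      then show ?thesis using True by (simp add: push_append push_Cons)
    next
      case False
      then have "E v (fst x)" using \<open>rel v x\<close> by (auto simp: rel_def)
      then have r: "set (push w1 v) \<subseteq> {Sep}" using nonrel_sep h by blast
      have b: "bead v x = Sep" using False by (simp add: bead_def)
      have "push (w1 @ x # w2) v = push w1 v @ Sep # push w2 v"
        using \<open>rel v x\<close> b by (simp add: push_append push_Cons)
      also have "\<dots> = Sep # push w1 v @ push w2 v" using sep_comm[OF r] .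
      also have "\<dots> = push (x # w1 @ w2) v" using \<open>rel v x\<close> b by (simp add: push_append push_Cons)
      finally show ?thesis .
    qed
  qed
qed

lemma cdec: "cancel x (push t) \<Longrightarrow> \<exists>w1 w2. t = w1 @ inv_letter x # w2 \<and> (\<forall>z\<in>set w1. \<not> rel (fst x) z)"
proof -
  assume c: "cancel x (push t)"
  then obtain y ys where f: "filter (rel (fst x)) t = y # ys"
    by (cases "filter (rel (fst x)) t") (auto simp: cancel_def push_def)
  then have "bead (fst x) y = Bd (\<not> snd x)" using c by (simp add: cancel_def push_def)
  then have "y = inv_letter x" by (cases y; cases x) (auto simp: bead_def inv_letter_def split: if_splits)
  with f show ?thesis by (auto simp: filter_eq_Cons_iff)
qed

lemma nonrel_noE: "\<not> rel (fst x) z \<Longrightarrow> \<not> E (fst z) (fst x)"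
  using symE by (auto simp: rel_def)

lemma act_step: "red t \<Longrightarrow> \<exists>t'. red t' \<and> act x (push t) = push t' \<and> geq E (x # t) t'
   \<and> (t' = x # t \<or> length t' < Suc (length t))"
proof (cases "cancel x (push t)")
  case True
  assume rt: "red t"
  obtain w1 w2 where t: "t = w1 @ inv_letter x # w2" and nr: "\<forall>z\<in>set w1. \<not> rel (fst x) z"
    using cdec[OF True] by blast
  have p: "push t = push (inv_letter x # w1 @ w2)" using commute_push[of w1 "inv_letter x" w2] nr t by simp
  have "red (inv_letter x # w1 @ w2)" using rt p red_push_cong by metis
  then have r': "red (w1 @ w2)" by (rule red_tl)
  have "act x (push t) = push (w1 @ w2)" using p canc by simp
  moreover have "geq E (x # t) (w1 @ w2)"
  proof -
    have "geq E ([x] @ w1 @ inv_letter x # w2) ([x] @ inv_letter x # w1 @ w2)"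
      using nr nonrel_noE by (intro move_left) auto
    moreover have "geq E ([] @ [x, inv_letter x] @ (w1 @ w2)) ([] @ (w1 @ w2))" by (rule geq_cancel)
    ultimately show ?thesis using t by (auto intro: geq_trans)
  qed
  ultimately show ?thesis using r' t by auto
next
  case False
  assume rt: "red t"
  have "red (x # t)" unfolding red_def
  proof
    fix v
    show "adj_ok (push (x # t) v)"
      using rt False by (auto simp: red_def push_Cons adj_ok_Cons cancel_def bead_def)
  qed
  then show ?thesis using push_act[OF False] by auto
qed

lemma pil_main: "\<exists>t. red t \<and> pil w = push t \<and> geq E w t \<and> (t = w \<or> length t < length w)"
proof (induction w)
  case Nil then show ?case by (auto simp: pil_Nil)
next
  case (Cons x w)
  then obtain t where t: "red t" "pil w = push t" "geq E w t" "t = w \<or> length t < length w" by blast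
  obtain t' where t': "red t'" "act x (push t) = push t'" "geq E (x # t) t'"
    "t' = x # t \<or> length t' < Suc (length t)" using act_step[OF t(1)] by blast
  have "geq E (x # w) t'" using geq_Cons[OF t(3)] t'(3) geq_trans by blast
  moreover have "t' = x # w \<or> length t' < length (x # w)" using t(4) t'(4) by auto
  ultimately show ?case using t t' by auto
qed

lemma L2: "red t \<Longrightarrow> act x (act (inv_letter x) (push t)) = push t"
proof (cases "cancel (inv_letter x) (push t)")
  case True
  assume rt: "red t"
  obtain w1 w2 where t: "t = w1 @ x # w2" and nr: "\<forall>z\<in>set w1. \<not> rel (fst x) z"
    using cdec[OF True] by auto
  have p: "push t = push (x # w1 @ w2)" using commute_push[of w1 x w2] nr t by simp
  have a1: "act (inv_letter x) (push t) = push (w1 @ w2)" using p canc[of "inv_letter x"] by simp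
  have "red (x # w1 @ w2)" using rt p red_push_cong by metis
  then have "\<not> cancel x (push (w1 @ w2))"
    unfolding red_def cancel_def by (metis adj_ok_Cons bead_self push_Cons rel_self)
  then show ?thesis using a1 p push_act by simp
next
  case False
  then show ?thesis using push_act canc[of x t] by simp
qed

lemma csep: "cancel x (push t) \<Longrightarrow> rel v x \<Longrightarrow> v \<noteq> fst x \<Longrightarrow> push t v = Sep # tl (push t v)"
proof -
  assume c: "cancel x (push t)" and r: "rel v x" and ne: "v \<noteq> fst x"
  obtain w1 w2 where t: "t = w1 @ inv_letter x # w2" and nr: "\<forall>z\<in>set w1. \<not> rel (fst x) z"
    using cdec[OF c] by blast
  have p: "push t = push (inv_letter x # w1 @ w2)" using commute_push[of w1 "inv_letter x" w2] nr t by simp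
  show ?thesis using p r ne by (simp add: push_Cons bead_def)
qed

lemma act_apply: "act x \<sigma> v = (if cancel x \<sigma> then (if rel v x then tl (\<sigma> v) else \<sigma> v)
   else (if rel v x then bead v x # \<sigma> v else \<sigma> v))"
  by (simp add: act_def)

lemma L3: "red t \<Longrightarrow> \<not> E (fst x) (fst y) \<Longrightarrow> act x (act y (push t)) = act y (act x (push t))"
proof (cases "fst x = fst y")
  case True
  assume rt: "red t"
  have "y = x \<or> y = inv_letter x" using True by (cases x; cases y) (auto simp: inv_letter_def)
  then show ?thesis
  proof
    assume "y = inv_letter x"
    then show ?thesis using L2[OF rt, of x] L2[OF rt, of "inv_letter x"] by simp
  qed simp
next
  case False
  assume rt: "red t" and ne: "\<not> E (fst x) (fst y)"
  let ?p = "push t"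
  have nxy: "\<not> rel (fst x) y" using False ne by (auto simp: rel_def)
  have nyx: "\<not> rel (fst y) x" using False ne symE by (auto simp: rel_def)
  have cx: "cancel x (act y ?p) = cancel x ?p" using nxy by (simp add: act_def cancel_def)
  have cy: "cancel y (act x ?p) = cancel y ?p" using nyx by (simp add: act_def cancel_def)
  show ?thesis
  proof
    fix v
    have vx: "rel v x \<Longrightarrow> v \<noteq> fst y" using nyx by auto
    have vy: "rel v y \<Longrightarrow> v \<noteq> fst x" using nxy by auto
    have bx: "rel v x \<Longrightarrow> rel v y \<Longrightarrow> bead v x = Sep" using vy by (simp add: bead_def)
    have by': "rel v x \<Longrightarrow> rel v y \<Longrightarrow> bead v y = Sep" using vx by (simp add: bead_def)
    have sx: "cancel x ?p \<Longrightarrow> rel v x \<Longrightarrow> rel v y \<Longrightarrow> ?p v = Sep # tl (?p v)" using csep vy by blast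
    have sy: "cancel y ?p \<Longrightarrow> rel v x \<Longrightarrow> rel v y \<Longrightarrow> ?p v = Sep # tl (?p v)" using csep vx by blast
    show "act x (act y ?p) v = act y (act x ?p) v"
      apply (simp only: act_apply cx cy)
      using bx by' sx sy by (cases "cancel x ?p"; cases "cancel y ?p"; cases "rel v x"; cases "rel v y") simp_all
  qed
qed

lemma pil_red: "\<exists>t. red t \<and> pil w = push t"
  using pil_main by blast

lemma foldr_act_append: "pil (u @ w) = foldr act u (pil w)" by (simp add: pil_def)

lemma pil_step: "raag_step E a b \<Longrightarrow> pil a = pil b"
proof (induction rule: raag_step.induct)
  case (cancel u x w)
  obtain t where "red t" "pil w = push t" using pil_red by blast
  then show ?case using L2[of t "x"] L2[of t "inv_letter x"] by (simp add: foldr_act_append)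
next
  case (insert u w x)
  obtain t where "red t" "pil w = push t" using pil_red by blast
  then show ?case using L2[of t "x"] L2[of t "inv_letter x"] by (simp add: foldr_act_append)
next
  case (commute x y u w)
  obtain t where "red t" "pil w = push t" using pil_red by blast
  then show ?case using L3[of t x y] commute by (simp add: foldr_act_append)
qed

lemma pil_geq: "geq E a b \<Longrightarrow> pil a = pil b"
  unfolding geq_def by (induction rule: rtranclp_induct) (auto dest: pil_step)

lemma red_pil: "red r \<Longrightarrow> pil r = push r"
proof (induction r)
  case Nil then show ?case by (simp add: pil_Nil fun_eq_iff)
next
  case (Cons x r)
  have "red r" using Cons.prems red_tl by blast
  then have "pil r = push r" using Cons.IH by blast
  moreover have "\<not> cancel x (push r)" using Cons.prems
    unfolding red_def cancel_def by (metis adj_ok_Cons bead_self push_Cons rel_self)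
  ultimately show ?case using push_act by simp
qed

lemma len_sum: "length (xs :: 'v word) = (\<Sum>v\<in>UNIV. length (filter (\<lambda>y. fst y = v) xs))"
proof (induction xs)
  case Nil then show ?case by simp
next
  case (Cons x xs)
  have "(\<Sum>v\<in>UNIV. length (filter (\<lambda>y. fst y = v) (x # xs)))
     = (\<Sum>v\<in>UNIV. (if fst x = v then 1 else 0) + length (filter (\<lambda>y. fst y = v) xs))"
    by (rule sum.cong) auto
  also have "\<dots> = 1 + (\<Sum>v\<in>UNIV. length (filter (\<lambda>y. fst y = v) xs))"
    by (simp add: sum.distrib)
  finally show ?case using Cons by simp
qed

lemma filt_push: "length (filter (\<lambda>y. fst y = v) xs) = length (filter (\<lambda>b. b \<noteq> Sep) (push xs v))"
proof -
  have "filter (\<lambda>b. b \<noteq> Sep) (push xs v) = map (bead v) (filter (\<lambda>y. fst y = v) xs)"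
    unfolding push_def filter_map filter_filter
    by (rule arg_cong[where f="map (bead v)"]) (rule filter_cong, auto simp: bead_def rel_def)
  then show ?thesis by simp
qed

lemma push_len: "push t = push r \<Longrightarrow> length t = length r"
proof -
  assume h: "push t = push r"
  have "length t = (\<Sum>v\<in>UNIV. length (filter (\<lambda>b. b \<noteq> Sep) (push t v)))"
    using len_sum[of t] filt_push[of _ t] by simp
  also have "\<dots> = (\<Sum>v\<in>UNIV. length (filter (\<lambda>b. b \<noteq> Sep) (push r v)))" using h by simp
  also have "\<dots> = length r" using len_sum[of r] filt_push[of _ r] by simp
  finally show ?thesis .
qed

lemma push_set: "fst ` set t = {v. \<exists>b. Bd b \<in> set (push t v)}"
proof
  show "fst ` set t \<subseteq> {v. \<exists>b. Bd b \<in> set (push t v)}"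
  proof
    fix v assume "v \<in> fst ` set t"
    then obtain y where y: "y \<in> set t" "v = fst y" by blast
    then have "y \<in> set (filter (rel v) t)" by simp
    then have "bead v y \<in> set (push t v)" unfolding push_def by simp
    then have "Bd (snd y) \<in> set (push t v)" using y(2) by simp
    then show "v \<in> {v. \<exists>b. Bd b \<in> set (push t v)}" by blast
  qed
next
  show "{v. \<exists>b. Bd b \<in> set (push t v)} \<subseteq> fst ` set t"
  proof
    fix v assume "v \<in> {v. \<exists>b. Bd b \<in> set (push t v)}"
    then obtain b where "Bd b \<in> set (push t v)" by blast
    then obtain y where y: "y \<in> set t" "bead v y = Bd b" by (auto simp: push_def)
    then have "fst y = v" by (auto simp: bead_def split: if_splits)
    then show "v \<in> fst ` set t" using y by blast
  qed
qed

lemma red_len: "red r \<Longrightarrow> geq E r w \<Longrightarrow> length r \<le> length w"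
proof -
  assume r: "red r" and g: "geq E r w"
  obtain t where t: "red t" "pil w = push t" "geq E w t" "t = w \<or> length t < length w"
    using pil_main by blast
  have "push r = push t" using red_pil[OF r] pil_geq[OF g] t(2) by simp
  then have "length r = length t" using push_len by metis
  then show ?thesis using t(4) by auto
qed

lemma red_wlen: "red r \<Longrightarrow> wlen E r = length r"
proof -
  assume r: "red r"
  obtain w where w: "geq E r w" "length w = wlen E r" using wlen_ex by blast
  have "length r \<le> wlen E r" using red_len[OF r w(1)] w(2) by simp
  then show ?thesis using wlen_le_len[of r] by simp
qed

lemma exists_red: "\<exists>r. red r \<and> geq E g r \<and> length r = wlen E g"
proof -
  obtain t where t: "red t" "geq E g t" using pil_main[of g] by blast
  have "wlen E g = length t" using wlen_cong[OF t(2)] red_wlen[OF t(1)] by simp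
  then show ?thesis using t by (intro exI[of _ t]) simp
qed

lemma minlen_red: "length w = wlen E w \<Longrightarrow> red w"
proof -
  assume h: "length w = wlen E w"
  obtain t where t: "red t" "pil w = push t" "geq E w t" "t = w \<or> length t < length w"
    using pil_main by blast
  have "wlen E w = length t" using wlen_cong[OF t(3)] red_wlen[OF t(1)] by simp
  then have "t = w" using h t(4) by linarith
  then show ?thesis using t(1) by simp
qed

lemma red_push_eq: "red a \<Longrightarrow> red b \<Longrightarrow> geq E a b \<Longrightarrow> push a = push b"
proof -
  assume "red a" "red b" "geq E a b"
  then show ?thesis using red_pil[of a] red_pil[of b] pil_geq[of a b] by simp
qed

end



context raag begin

declare geq_trans[trans]

lemma reduced_for_red: "reduced_word_for E w g \<Longrightarrow> red w"
  unfolding reduced_word_for_def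
  by (metis minlen_red wlen_cong)

lemma supp_red: "red r \<Longrightarrow> geq E g r \<Longrightarrow> supp E g = fst ` set r"
proof -
  assume r: "red r" and g: "geq E g r"
  have rw: "reduced_word_for E r g" unfolding reduced_word_for_def
    using r g geq_sym red_wlen wlen_cong by metis
  show ?thesis
  proof
    show "supp E g \<subseteq> fst ` set r"
    proof
      fix v assume "v \<in> supp E g"
      then obtain w where w: "reduced_word_for E w g" "v \<in> fst ` set w" by (auto simp: supp_def)
      have "red w" using reduced_for_red[OF w(1)] .
      moreover have "geq E w r" using w(1) g unfolding reduced_word_for_def by (auto intro: geq_trans)
      ultimately have "push w = push r" using red_push_eq r by blast
      then show "v \<in> fst ` set r" using w(2) push_set by metis
    qed
  next
    show "fst ` set r \<subseteq> supp E g" using rw by (auto simp: supp_def)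
  qed
qed

lemma wlen_Cons: "wlen E (y # t) \<le> Suc (wlen E t)"
proof -
  obtain w where w: "geq E t w" "length w = wlen E t" using wlen_ex by blast
  have "wlen E (y # t) \<le> length (y # w)" using geq_Cons[OF w(1)] by (rule wlen_le)
  then show ?thesis using w by simp
qed

lemma sg_red: "red p \<Longrightarrow> v \<in> start_gens E p \<longleftrightarrow> (\<exists>u y w. p = u @ y # w \<and> fst y = v \<and> (\<forall>z\<in>set u. \<not> rel v z))"
proof
  assume rp: "red p" and "v \<in> start_gens E p"
  then obtain \<epsilon> h where h: "geq E p ((v, \<epsilon>) # h)" "wlen E p = 1 + wlen E h"
    by (auto simp: start_gens_def)
  obtain h' where h': "red h'" "geq E h h'" "length h' = wlen E h" using exists_red by blast
  have g2: "geq E p ((v, \<epsilon>) # h')" using h(1) geq_Cons[OF h'(2)] geq_trans by blast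
  have "wlen E ((v, \<epsilon>) # h') = length ((v, \<epsilon>) # h')"
    using wlen_cong[OF g2] h(2) h'(3) by simp
  then have "red ((v, \<epsilon>) # h')" using minlen_red by simp
  then have "push p = push ((v, \<epsilon>) # h')" using red_push_eq rp g2 by blast
  then have "push p v = Bd \<epsilon> # push h' v" by (metis push_Cons rel_self bead_self fst_conv snd_conv)
  then obtain y ys where f: "filter (rel v) p = y # ys" and b: "bead v y = Bd \<epsilon>"
    unfolding push_def by (cases "filter (rel v) p") auto
  then have fy: "fst y = v" by (auto simp: bead_def split: if_splits)
  obtain us vs where "p = us @ y # vs" "\<forall>z\<in>set us. \<not> rel v z" using f by (auto simp: filter_eq_Cons_iff)
  then show "\<exists>u y w. p = u @ y # w \<and> fst y = v \<and> (\<forall>z\<in>set u. \<not> rel v z)"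
    using fy by blast
next
  assume rp: "red p" and "\<exists>u y w. p = u @ y # w \<and> fst y = v \<and> (\<forall>z\<in>set u. \<not> rel v z)"
  then obtain u y w where p: "p = u @ y # w" "fst y = v" "\<forall>z\<in>set u. \<not> rel v z" by blast
  have "geq E ([] @ u @ y # w) ([] @ y # u @ w)"
    using p nonrel_noE by (intro move_left) auto
  then have g: "geq E p (y # u @ w)" using p by simp
  have l: "wlen E p = length p" using red_wlen[OF rp] .
  have "wlen E p \<le> Suc (wlen E (u @ w))" using wlen_cong[OF g] wlen_Cons by simp
  moreover have "wlen E (u @ w) \<le> length (u @ w)" by (rule wlen_le_len)
  ultimately have "wlen E p = 1 + wlen E (u @ w)" using l p by simp
  then show "v \<in> start_gens E p" unfolding start_gens_def using g p
    by (intro CollectI exI[of _ "snd y"] exI[of _ "u @ w"]) (cases y, auto)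
qed

lemma geq_pow: "geq E g r \<Longrightarrow> geq E (pow_word g n) (pow_word r n)"
  by (induction n) (simp_all add: pow_word_Suc geq_app)

lemma push_pow: "push (pow_word r n) v = concat (replicate n (push r v))"
  by (induction n) (simp_all add: pow_word_Suc push_append)

lemma adj_ok_rep: "adj_ok l \<Longrightarrow> adj_ok (l @ l) \<Longrightarrow> adj_ok (concat (replicate n l))"
proof (induction n)
  case 0 then show ?case by simp
next
  case (Suc n)
  show ?case
  proof (cases "n = 0 \<or> l = []")
    case True then show ?thesis using Suc by auto
  next
    case False
    then have "concat (replicate n l) \<noteq> []" "hd (concat (replicate n l)) = hd l"
      by (cases n; simp)+
    then show ?thesis using Suc False by (simp add: adj_ok_append)
  qed
qed

lemma last_filter_dec: "filter P xs = ys @ [y] \<Longrightarrow> \<exists>m w. xs = m @ y # w \<and> (\<forall>z\<in>set w. \<not> P z)"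
proof -
  assume "filter P xs = ys @ [y]"
  then have "filter P (rev xs) = y # rev ys" by (simp add: rev_filter[symmetric])
  then obtain us vs where "rev xs = us @ y # vs" "\<forall>z\<in>set us. \<not> P z" by (auto simp: filter_eq_Cons_iff)
  then have "xs = rev vs @ y # rev us" "\<forall>z\<in>set (rev us). \<not> P z" by (auto simp: rev_swap)
  then show ?thesis by blast
qed

lemma red_pow:
  assumes rr: "red r" and cr: "\<forall>c. wlen E r \<le> wlen E (c @ r @ inv_word c)"
  shows "red (pow_word r n)"
proof -
  have bd: "\<not> (push r v \<noteq> [] \<and> (\<exists>a. last (push r v) = Bd a \<and> hd (push r v) = Bd (\<not> a)))" for v
  proof
    assume "push r v \<noteq> [] \<and> (\<exists>a. last (push r v) = Bd a \<and> hd (push r v) = Bd (\<not> a))"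
    then obtain a where ne: "push r v \<noteq> []" and la: "last (push r v) = Bd a" and ha: "hd (push r v) = Bd (\<not> a)" by blast
    obtain y rest where f: "filter (rel v) r = y # rest" using ne unfolding push_def by (cases "filter (rel v) r") auto
    have by1: "bead v y = Bd (\<not> a)" using ha f by (simp add: push_def)
    then have y: "y = (v, \<not> a)" by (cases y) (auto simp: bead_def split: if_splits)
    obtain w1 w2 where r1: "r = w1 @ y # w2" and nw1: "\<forall>z\<in>set w1. \<not> rel v z" and rest: "rest = filter (rel v) w2"
      using f by (auto simp: filter_eq_Cons_iff)
    have "rest \<noteq> []"
    proof
      assume "rest = []"
      then have "last (push r v) = Bd (\<not> a)" using f by1 by (simp add: push_def)
      then show False using la by simp
    qed
    then obtain ys y2 where rs: "rest = ys @ [y2]" by (metis rev_exhaust)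
    have "last (push r v) = bead v y2" using f rs by (simp add: push_def)
    then have "bead v y2 = Bd a" using la by simp
    then have y2: "y2 = (v, a)" by (cases y2) (auto simp: bead_def split: if_splits)
    obtain m w4 where w2: "w2 = m @ y2 # w4" and nw4: "\<forall>z\<in>set w4. \<not> rel v z"
      using last_filter_dec[of "rel v" w2 ys y2] rest rs by auto
    have iy: "inv_letter y2 = y" using y y2 by (simp add: inv_letter_def)
    have iy': "inv_letter y = y2" using y y2 by (simp add: inv_letter_def)
    let ?c = "[y2]"
    have "?c @ r @ inv_word ?c = [y2] @ w1 @ y # m @ y2 # w4 @ [y]" using r1 w2 iy by simp
    also have "geq E \<dots> ([y2] @ y # w1 @ m @ y2 # w4 @ [y])"
      using nw1 nonrel_noE y by (intro move_left) auto
    also have "([y2] @ y # w1 @ m @ y2 # w4 @ [y]) = [] @ [y2, inv_letter y2] @ (w1 @ m @ y2 # w4 @ [y])"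
      using iy by simp
    also have "geq E \<dots> (w1 @ m @ y2 # w4 @ [y])" using geq_cancel[of "[]" y2] by simp
    also have "geq E (w1 @ m @ y2 # w4 @ [y]) ((w1 @ m @ [y2]) @ y # w4 @ [])"
    proof -
      have "\<forall>z\<in>set w4. \<not> E (fst z) (fst y)" using nw4 nonrel_noE y by auto
      then show ?thesis using move_left[of w4 y "w1 @ m @ [y2]" "[]"] by simp
    qed
    also have "((w1 @ m @ [y2]) @ y # w4 @ []) = (w1 @ m) @ [y2, inv_letter y2] @ w4" using iy by simp
    also have "geq E \<dots> ((w1 @ m) @ w4)" by (rule geq_cancel)
    finally have g: "geq E (?c @ r @ inv_word ?c) (w1 @ m @ w4)" by simp
    have "wlen E (?c @ r @ inv_word ?c) \<le> length (w1 @ m @ w4)" by (rule wlen_le[OF g])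
    moreover have "length r = length (w1 @ m @ w4) + 2" using r1 w2 by simp
    moreover have "wlen E r = length r" using red_wlen[OF rr] .
    ultimately show False using cr[rule_format, of ?c] by simp
  qed
  show ?thesis unfolding red_def
  proof
    fix v
    have "adj_ok (push r v)" using rr by (simp add: red_def)
    moreover have "adj_ok (push r v @ push r v)" using rr bd[of v] adj_ok_append by (simp add: red_def)
    ultimately show "adj_ok (push (pow_word r n) v)" using adj_ok_rep push_pow by simp
  qed
qed

end



lemma nths_cong: "(\<forall>i<length xs. i \<in> A \<longleftrightarrow> i \<in> B) \<Longrightarrow> nths xs A = nths xs B"
proof (induction xs arbitrary: A B)
  case Nil then show ?case by simp
next
  case (Cons x xs)
  have "nths xs {j. Suc j \<in> A} = nths xs {j. Suc j \<in> B}"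
    using Cons.prems by (intro Cons.IH) auto
  moreover have "0 \<in> A \<longleftrightarrow> 0 \<in> B" using Cons.prems by auto
  ultimately show ?case by (simp add: nths_Cons)
qed

lemma nths_none: "(\<forall>i<length xs. i \<notin> A) \<Longrightarrow> nths xs A = []"
proof -
  assume "\<forall>i<length xs. i \<notin> A"
  then have "set (nths xs A) = {}" by (auto simp: set_nths)
  then show ?thesis by simp
qed

lemma nths_split_elem: "nths w P = u @ y # w' \<Longrightarrow>
  \<exists>s. s \<in> P \<and> s < length w \<and> w ! s = y \<and> (\<forall>j. j < s \<and> j \<in> P \<longrightarrow> w ! j \<in> set u)"
proof (induction w arbitrary: P u)
  case Nil then show ?case by simp
next
  case (Cons x w)
  show ?case
  proof (cases "0 \<in> P")
    case True
    then have h: "x # nths w {j. Suc j \<in> P} = u @ y # w'" using Cons.prems by (simp add: nths_Cons)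
    show ?thesis
    proof (cases u)
      case Nil
      then show ?thesis using h True by (intro exI[of _ 0]) auto
    next
      case (Cons u0 u')
      then have "nths w {j. Suc j \<in> P} = u' @ y # w'" "u0 = x" using h by auto
      then obtain s where s: "Suc s \<in> P" "s < length w" "w ! s = y" "\<forall>j. j < s \<and> Suc j \<in> P \<longrightarrow> w ! j \<in> set u'"
        using Cons.IH by blast
      show ?thesis
      proof (intro exI[of _ "Suc s"] conjI allI impI)
        fix j assume j: "j < Suc s \<and> j \<in> P"
        show "(x # w) ! j \<in> set u"
        proof (cases j)
          case 0 then show ?thesis using Cons \<open>u0 = x\<close> by simp
        next
          case (Suc j') then show ?thesis using s(4) j Cons by auto
        qed
      qed (use s in auto)
    qed
  next
    case False
    then have "nths w {j. Suc j \<in> P} = u @ y # w'" using Cons.prems by (simp add: nths_Cons)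
    then obtain s where s: "Suc s \<in> P" "s < length w" "w ! s = y" "\<forall>j. j < s \<and> Suc j \<in> P \<longrightarrow> w ! j \<in> set u"
      using Cons.IH by blast
    show ?thesis
    proof (intro exI[of _ "Suc s"] conjI allI impI)
      fix j assume j: "j < Suc s \<and> j \<in> P"
      then obtain j' where "j = Suc j'" using False by (cases j) auto
      then show "(x # w) ! j \<in> set u" using s(4) j by auto
    qed (use s in auto)
  qed
qed

lemma nths_head: "i \<in> P \<Longrightarrow> i < length w \<Longrightarrow> (\<forall>j\<in>P. j < length w \<longrightarrow> i \<le> j) \<Longrightarrow>
  \<exists>rest. nths w P = w ! i # rest"
proof (induction w arbitrary: P i)
  case Nil then show ?case by simp
next
  case (Cons x w)
  show ?case
  proof (cases i)
    case 0 then show ?thesis using Cons.prems by (simp add: nths_Cons)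
  next
    case (Suc i')
    then have "0 \<notin> P" using Cons.prems by force
    moreover have "\<exists>rest. nths w {j. Suc j \<in> P} = w ! i' # rest"
      using Cons.prems Suc by (intro Cons.IH) auto
    ultimately show ?thesis using Suc by (simp add: nths_Cons)
  qed
qed

context raag begin

definition depw :: "'v word \<Rightarrow> nat \<Rightarrow> nat \<Rightarrow> bool" where
  "depw w i j \<longleftrightarrow> i < j \<and> j < length w \<and> rel (fst (w ! i)) (w ! j)"

lemma split_nths:
  "(\<forall>i j. i < j \<and> j < length w \<and> i \<in> X \<and> i \<in> D \<and> j \<in> X \<and> rel (fst (w ! i)) (w ! j) \<longrightarrow> j \<in> D)
   \<Longrightarrow> geq E (nths w X) (nths w (X - D) @ nths w (X \<inter> D))
     \<and> length (nths w X) = length (nths w (X - D)) + length (nths w (X \<inter> D))"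
proof (induction w arbitrary: X D)
  case Nil then show ?case by simp
next
  case (Cons x w)
  let ?X = "{j. Suc j \<in> X}" and ?D = "{j. Suc j \<in> D}"
  have cl: "\<forall>i j. i < j \<and> j < length w \<and> i \<in> ?X \<and> i \<in> ?D \<and> j \<in> ?X \<and> rel (fst (w ! i)) (w ! j) \<longrightarrow> j \<in> ?D"
  proof (intro allI impI)
    fix i j assume "i < j \<and> j < length w \<and> i \<in> ?X \<and> i \<in> ?D \<and> j \<in> ?X \<and> rel (fst (w ! i)) (w ! j)"
    then show "j \<in> ?D" using Cons.prems[rule_format, of "Suc i" "Suc j"] by auto
  qed
  have IH: "geq E (nths w ?X) (nths w (?X - ?D) @ nths w (?X \<inter> ?D))"
     "length (nths w ?X) = length (nths w (?X - ?D)) + length (nths w (?X \<inter> ?D))"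
    using Cons.IH[OF cl] by auto
  have e1: "{j. Suc j \<in> X - D} = ?X - ?D" by auto
  have e2: "{j. Suc j \<in> X \<inter> D} = ?X \<inter> ?D" by auto
  have n0: "nths (x # w) X = (if 0 \<in> X then [x] else []) @ nths w ?X" by (rule nths_Cons)
  have n1: "nths (x # w) (X - D) = (if 0 \<in> X \<and> 0 \<notin> D then [x] else []) @ nths w (?X - ?D)"
    unfolding nths_Cons[of x w "X - D"] e1 by simp
  have n2: "nths (x # w) (X \<inter> D) = (if 0 \<in> X \<and> 0 \<in> D then [x] else []) @ nths w (?X \<inter> ?D)"
    unfolding nths_Cons[of x w "X \<inter> D"] e2 by simp
  show ?case
  proof (cases "0 \<in> X")
    case False
    then show ?thesis unfolding n0 n1 n2 using IH by simp
  next
    case True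
    show ?thesis
    proof (cases "0 \<in> D")
      case False
      then show ?thesis unfolding n0 n1 n2 using IH True by (simp add: geq_Cons)
    next
      case True
      have nc: "\<forall>z\<in>set (nths w (?X - ?D)). \<not> E (fst z) (fst x)"
      proof
        fix z assume "z \<in> set (nths w (?X - ?D))"
        then obtain j where j: "j < length w" "Suc j \<in> X" "Suc j \<notin> D" "z = w ! j" by (auto simp: set_nths)
        have "\<not> rel (fst x) (w ! j)"
          using Cons.prems[rule_format, of 0 "Suc j"] j \<open>0 \<in> X\<close> True by auto
        then show "\<not> E (fst z) (fst x)" using j(4) nonrel_noE[of x "w ! j"] by simp
      qed
      have "geq E ([] @ nths w (?X - ?D) @ x # nths w (?X \<inter> ?D)) ([] @ x # nths w (?X - ?D) @ nths w (?X \<inter> ?D))"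
        using nc by (rule move_left)
      then have "geq E (x # nths w (?X - ?D) @ nths w (?X \<inter> ?D)) (nths w (?X - ?D) @ x # nths w (?X \<inter> ?D))"
        using geq_sym by simp
      then show ?thesis unfolding n0 n1 n2 using IH True \<open>0 \<in> X\<close> geq_Cons[OF IH(1), of x]
        by (auto intro: geq_trans)
    qed
  qed
qed

lemma reach_le: "(depw w)\<^sup>*\<^sup>* i j \<Longrightarrow> i \<le> j"
  by (induction rule: rtranclp_induct) (auto simp: depw_def)

lemma reach_lt0: "(depw w)\<^sup>*\<^sup>* i j \<Longrightarrow> i = j \<or> (i < j \<and> j < length w)"
  by (induction rule: rtranclp_induct) (auto simp: depw_def)

lemma reach_lt: "(depw w)\<^sup>*\<^sup>* i j \<Longrightarrow> i \<noteq> j \<Longrightarrow> i < j \<and> j < length w"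
  using reach_lt0 by blast

lemma reach_shift1: "(depw v)\<^sup>*\<^sup>* i j \<Longrightarrow> (depw (u @ v))\<^sup>*\<^sup>* (i + length u) (j + length u)"
proof (induction rule: rtranclp_induct)
  case base then show ?case by simp
next
  case (step y z)
  have "depw (u @ v) (y + length u) (z + length u)" using step(2) by (auto simp: depw_def nth_append)
  with step(3) show ?case by (rule rtranclp.rtrancl_into_rtrancl)
qed

lemma reach_shift2: "(depw (u @ v))\<^sup>*\<^sup>* a b \<Longrightarrow> length u \<le> a \<Longrightarrow>
   length u \<le> b \<and> (depw v)\<^sup>*\<^sup>* (a - length u) (b - length u)"
proof (induction rule: rtranclp_induct)
  case base then show ?case by simp
next
  case (step y z)
  then have y: "length u \<le> y" "(depw v)\<^sup>*\<^sup>* (a - length u) (y - length u)" by auto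
  have d: "depw v (y - length u) (z - length u)" using step(2) y(1) by (auto simp: depw_def nth_append)
  have "(depw v)\<^sup>*\<^sup>* (a - length u) (z - length u)" using y(2) d by (rule rtranclp.rtrancl_into_rtrancl)
  moreover have "length u \<le> z" using y step(2) by (auto simp: depw_def)
  ultimately show ?case by blast
qed

lemma reach_shift: "(depw (u @ v))\<^sup>*\<^sup>* (i + length u) (j + length u) \<longleftrightarrow> (depw v)\<^sup>*\<^sup>* i j"
  using reach_shift1[of v i j u] reach_shift2[of u v "i + length u" "j + length u"] by auto

lemma reach_prefix1: "(depw (u @ v))\<^sup>*\<^sup>* i j \<Longrightarrow> j < length u \<longrightarrow> (depw u)\<^sup>*\<^sup>* i j"
proof (induction rule: rtranclp_induct)
  case base then show ?case by simp
next
  case (step y z)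
  show ?case
  proof
    assume z: "z < length u"
    then have "y < length u" using step(2) by (auto simp: depw_def)
    then have "(depw u)\<^sup>*\<^sup>* i y" using step(3) by simp
    moreover have "depw u y z" using step(2) z by (auto simp: depw_def nth_append)
    ultimately show "(depw u)\<^sup>*\<^sup>* i z" by (rule rtranclp.rtrancl_into_rtrancl)
  qed
qed

lemma reach_prefix2: "(depw u)\<^sup>*\<^sup>* i j \<Longrightarrow> (depw (u @ v))\<^sup>*\<^sup>* i j"
proof (induction rule: rtranclp_induct)
  case base then show ?case by simp
next
  case (step y z)
  have "depw (u @ v) y z" using step(2) by (auto simp: depw_def nth_append)
  with step(3) show ?case by (rule rtranclp.rtrancl_into_rtrancl)
qed

lemma reach_prefix: "j < length u \<Longrightarrow> (depw (u @ v))\<^sup>*\<^sup>* i j \<longleftrightarrow> (depw u)\<^sup>*\<^sup>* i j"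
  using reach_prefix1 reach_prefix2 by blast

lemma conn_edge:
  assumes c: "connected_span E S" and v0: "v0 \<in> H" and HS: "H \<subseteq> S" and ne: "H \<noteq> S"
  shows "\<exists>w\<in>H. \<exists>w'\<in>S. w' \<notin> H \<and> E w w'"
proof -
  obtain z where z: "z \<in> S" "z \<notin> H" using HS ne by blast
  have "(\<lambda>x y. E x y \<and> x \<in> S \<and> y \<in> S)\<^sup>*\<^sup>* v0 z" using c v0 HS z unfolding connected_span_def by blast
  then have "z \<notin> H \<longrightarrow> (\<exists>w\<in>H. \<exists>w'\<in>S. w' \<notin> H \<and> E w w')"
  proof (induction rule: rtranclp_induct)
    case base then show ?case using v0 by simp
  next
    case (step y z) then show ?case by blast
  qed
  then show ?thesis using z by blast
qed

end



context raag begin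

lemma geq_lcancel: "geq E (a @ x) (a @ y) \<Longrightarrow> geq E x y"
proof -
  assume h: "geq E (a @ x) (a @ y)"
  have "geq E (inv_word a @ (a @ x) @ []) (inv_word a @ (a @ y) @ [])" using geq_ctx[OF h] .
  moreover have "geq E ([] @ (inv_word a @ a) @ x) ([] @ [] @ x)" by (rule geq_ctx[OF geq_inv_l])
  moreover have "geq E ([] @ (inv_word a @ a) @ y) ([] @ [] @ y)" by (rule geq_ctx[OF geq_inv_l])
  ultimately show ?thesis by (auto intro: geq_trans geq_sym)
qed

lemma geq_rcancel: "geq E (x @ b) (y @ b) \<Longrightarrow> geq E x y"
proof -
  assume h: "geq E (x @ b) (y @ b)"
  have "geq E ([] @ (x @ b) @ inv_word b) ([] @ (y @ b) @ inv_word b)" using geq_ctx[OF h] .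
  moreover have "geq E (x @ (b @ inv_word b) @ []) (x @ [] @ [])" by (rule geq_ctx[OF geq_inv_r])
  moreover have "geq E (y @ (b @ inv_word b) @ []) (y @ [] @ [])" by (rule geq_ctx[OF geq_inv_r])
  ultimately show ?thesis by (auto intro: geq_trans geq_sym)
qed

lemma H3:
  assumes conn: "connected_span E (fst ` set r)" and q: "q < length r" "fst (r ! q) = v0"
    and qmin: "\<And>t. t < length r \<Longrightarrow> fst (r ! t) = v0 \<Longrightarrow> q \<le> t"
    and K: "K = CARD('v) - 1"
  shows "\<And>s. K * length r \<le> s \<Longrightarrow> s < Suc K * length r \<Longrightarrow> (depw (pow_word r (Suc K)))\<^sup>*\<^sup>* q s"
proof -
  define L where "L = length r"
  define W where "W = pow_word r (Suc K)"
  define S where "S = fst ` set r"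
  have lW: "length W = Suc K * L" by (simp add: W_def L_def)
  have idx: "c * L + t < Suc K * L" if "c \<le> K" "t < L" for c t
  proof -
    have "Suc c * L \<le> Suc K * L" using that by (intro mult_le_mono1) simp
    moreover have "c * L + t < Suc c * L" using that by simp
    ultimately show ?thesis by linarith
  qed
  have Wnth: "W ! (c * L + t) = r ! t" if "c \<le> K" "t < L" for c t
    using nth_pow_word[of "c * L + t" "Suc K" r] idx[OF that] that by (simp add: W_def L_def)
  define H where "H c = {w \<in> S. \<forall>t<L. fst (r ! t) = w \<longrightarrow> (depw W)\<^sup>*\<^sup>* q (c * L + t)}" for c
  have HS: "H c \<subseteq> S" for c by (auto simp: H_def)
  have H0: "v0 \<in> H 0"
  proof -
    have "v0 \<in> S" using q by (auto simp: S_def)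
    moreover have "(depw W)\<^sup>*\<^sup>* q t" if "t < L" "fst (r ! t) = v0" for t
    proof (cases "q = t")
      case True then show ?thesis by simp
    next
      case False
      then have "q < t" using qmin that L_def by force
      moreover have "W ! q = r ! q" "W ! t = r ! t" using Wnth[of 0 q] Wnth[of 0 t] q that L_def by auto
      ultimately have "depw W q t" using that q idx[of 0 t] lW by (auto simp: depw_def rel_def)
      then show ?thesis by simp
    qed
    ultimately show ?thesis by (auto simp: H_def)
  qed
  have Hmono: "H c \<subseteq> H (Suc c)" if "c < K" for c
  proof
    fix w assume w: "w \<in> H c"
    have "(depw W)\<^sup>*\<^sup>* q (Suc c * L + t)" if "t < L" "fst (r ! t) = w" for t
    proof -
      have "(depw W)\<^sup>*\<^sup>* q (c * L + t)" using w that by (auto simp: H_def)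
      moreover have "depw W (c * L + t) (Suc c * L + t)"
        using Wnth[of c t] Wnth[of "Suc c" t] idx[of "Suc c" t] \<open>c < K\<close> that lW L_def
        by (auto simp: depw_def rel_def)
      ultimately show ?thesis by (rule rtranclp.rtrancl_into_rtrancl)
    qed
    then show "w \<in> H (Suc c)" using w by (auto simp: H_def)
  qed
  have Hedge: "w' \<in> H (Suc c)" if cK': "c < K" and wH: "w \<in> H c" and wS: "w' \<in> S" and eW: "E w w'" for c w w'
  proof -
    have "w \<in> fst ` set r" using wH HS unfolding S_def by blast
    then obtain t0 where t0: "t0 < L" "fst (r ! t0) = w" unfolding L_def
      by (metis imageE in_set_conv_nth)
    have r0: "(depw W)\<^sup>*\<^sup>* q (c * L + t0)" using wH t0 by (auto simp: H_def)
    have "(depw W)\<^sup>*\<^sup>* q (Suc c * L + t)" if "t < L" "fst (r ! t) = w'" for t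
    proof -
      have "depw W (c * L + t0) (Suc c * L + t)"
        using Wnth[of c t0] Wnth[of "Suc c" t] idx[of "Suc c" t] \<open>c < K\<close> that t0 lW \<open>E w w'\<close>
        by (auto simp: depw_def rel_def)
      with r0 show ?thesis by (rule rtranclp.rtrancl_into_rtrancl)
    qed
    then show ?thesis using wS by (auto simp: H_def)
  qed
  have Hv0: "c \<le> K \<Longrightarrow> v0 \<in> H c" for c
  proof (induction c)
    case 0 show ?case using H0 by simp
  next
    case (Suc c) then show ?case using Hmono[of c] by auto
  qed
  have Hcard: "min (Suc c) (card S) \<le> card (H c)" if "c \<le> K" for c
    using that
  proof (induction c)
    case 0
    have "H 0 \<noteq> {}" using H0 by blast
    then have "card (H 0) \<ge> 1" by (simp add: Suc_leI card_gt_0_iff)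
    then show ?case by simp
  next
    case (Suc c)
    then have cK: "c < K" by simp
    have IH: "min (Suc c) (card S) \<le> card (H c)" using Suc by simp
    show ?case
    proof (cases "H c = S")
      case True
      then have "H (Suc c) = S" using Hmono[OF cK] HS by blast
      then show ?thesis by simp
    next
      case False
      have "v0 \<in> H c" using Hv0 cK by simp
      then obtain w w' where ww: "w \<in> H c" "w' \<in> S" "w' \<notin> H c" "E w w'"
        using conn_edge[of S "v0" "H c"] conn False HS unfolding S_def by blast
      have "insert w' (H c) \<subseteq> H (Suc c)" using Hmono[OF cK] Hedge[OF cK ww(1) ww(2) ww(4)] by blast
      then have "card (insert w' (H c)) \<le> card (H (Suc c))" by (intro card_mono) auto
      then have "Suc (card (H c)) \<le> card (H (Suc c))" using ww(3) by simp
      then show ?thesis using IH by simp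
    qed
  qed
  have "card S \<le> Suc K" using K card_mono[of UNIV S] by simp
  then have "card S \<le> card (H K)" using Hcard[of K] by simp
  then have HK: "H K = S" using HS[of K] by (intro card_seteq) auto
  fix s assume s: "K * length r \<le> s" "s < Suc K * length r"
  define t where "t = s - K * L"
  have t: "t < L" "s = K * L + t" using s by (auto simp: t_def L_def)
  have "fst (r ! t) \<in> S" using t by (auto simp: S_def L_def)
  then show "(depw (pow_word r (Suc K)))\<^sup>*\<^sup>* q s" using HK t by (auto simp: H_def W_def)
qed


lemma main:
  assumes rr: "red r" and cr: "\<forall>c. wlen E r \<le> wlen E (c @ r @ inv_word c)"
    and conn: "connected_span E (fst ` set r)" and v0: "v0 \<in> fst ` set r"
  shows "\<exists>p a b. conical E v0 p \<and> geq E (r @ a) (a @ p)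
     \<and> geq E (pow_word r (CARD('v) - 1)) (a @ b)
     \<and> length a + length b = (CARD('v) - 1) * length r \<and> red a \<and> red b \<and> red p \<and> length p = length r"
proof -
  define L where "L = length r"
  define K where "K = CARD('v) - 1"
  define W where "W = pow_word r (Suc K)"
  define RK where "RK = pow_word r K"
  have L0: "0 < L" using v0 L_def by (cases r) auto
  have W1: "W = r @ RK" by (simp add: W_def RK_def pow_word_Suc)
  have W2: "W = RK @ r" by (simp add: W_def RK_def pow_word_Suc')
  have lW: "length W = Suc K * L" by (simp add: W_def L_def)
  have lRK: "length RK = K * L" by (simp add: RK_def L_def)
  define q where "q = (LEAST t. t < L \<and> fst (r ! t) = v0)"
  have qex: "\<exists>t. t < L \<and> fst (r ! t) = v0" using v0 unfolding L_def by (metis imageE in_set_conv_nth)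
  have q: "q < L" "fst (r ! q) = v0" using LeastI_ex[OF qex] unfolding q_def by auto
  have qmin: "q \<le> t" if "t < length r" "fst (r ! t) = v0" for t
    unfolding q_def using that L_def by (intro Least_le) auto
  have H3: "(depw W)\<^sup>*\<^sup>* q s" if "K * L \<le> s" "s < Suc K * L" for s
    using H3[OF conn q[unfolded L_def] qmin K_def] that unfolding W_def L_def by blast
  have Wq: "W ! q = r ! q" using q by (simp add: W1 nth_append L_def)
  define D where "D = {s. (depw W)\<^sup>*\<^sup>* q s}"
  define E1 where "E1 = {s. (depw W)\<^sup>*\<^sup>* (q + L) s}"
  define DK where "DK = {s. (depw RK)\<^sup>*\<^sup>* q s}"
  have clD: "\<forall>i j. i < j \<and> j < length W \<and> i \<in> X \<and> i \<in> D \<and> j \<in> X \<and> rel (fst (W ! i)) (W ! j) \<longrightarrow> j \<in> D" for X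
    unfolding D_def by (auto simp: depw_def intro: rtranclp.rtrancl_into_rtrancl)
  have clE: "\<forall>i j. i < j \<and> j < length W \<and> i \<in> X \<and> i \<in> E1 \<and> j \<in> X \<and> rel (fst (W ! i)) (W ! j) \<longrightarrow> j \<in> E1" for X
    unfolding E1_def by (auto simp: depw_def intro: rtranclp.rtrancl_into_rtrancl)
  have clK: "\<forall>i j. i < j \<and> j < length RK \<and> i \<in> UNIV \<and> i \<in> DK \<and> j \<in> UNIV \<and> rel (fst (RK ! i)) (RK ! j) \<longrightarrow> j \<in> DK"
    unfolding DK_def by (auto simp: depw_def intro: rtranclp.rtrancl_into_rtrancl)
  have nall: "nths xs UNIV = xs" for xs :: "'v word" by (rule nths_all) simp
  define a where "a = nths W (- D)"
  define p where "p = nths W (D - E1)"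
  define e where "e = nths W (D \<inter> E1)"
  define aK where "aK = nths RK (- DK)"
  define b where "b = nths RK DK"
  have s1: "geq E W (a @ nths W D)" "length W = length a + length (nths W D)"
    using split_nths[OF clD[of UNIV]] unfolding a_def nall by (auto simp: Compl_eq_Diff_UNIV)
  have s2: "geq E (nths W D) (p @ e)" "length (nths W D) = length p + length e"
    using split_nths[OF clE[of D]] unfolding p_def e_def by auto
  have s3: "geq E W (nths W (- E1) @ nths W E1)"
    using split_nths[OF clE[of UNIV]] unfolding nall by (auto simp: Compl_eq_Diff_UNIV)
  have s4: "geq E RK (aK @ b)" "length RK = length aK + length b"
    using split_nths[OF clK] unfolding aK_def b_def nall by (auto simp: Compl_eq_Diff_UNIV)
  have aaK: "a = aK"
  proof -
    have "a = nths RK (- D) @ nths r {j. j + length RK \<in> - D}" unfolding a_def W2 by (rule nths_append)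
    moreover have "nths r {j. j + length RK \<in> - D} = []"
    proof (rule nths_none, intro allI impI)
      fix i assume "i < length r"
      then have "(depw W)\<^sup>*\<^sup>* q (i + length RK)" using H3 lRK L_def by simp
      then show "i \<notin> {j. j + length RK \<in> - D}" by (simp add: D_def)
    qed
    moreover have "nths RK (- D) = nths RK (- DK)"
      by (rule nths_cong) (auto simp: D_def DK_def W2 reach_prefix)
    ultimately show ?thesis by (simp add: aK_def)
  qed
  have qqL: "(depw W)\<^sup>*\<^sup>* q (q + L)" if "q + L < length W"
  proof -
    have "W ! (q + L) = r ! q"
      using nth_pow_word[of "q + L" "Suc K" r] that lW q unfolding W_def L_def by simp
    then have "depw W q (q + L)" using that Wq L0 by (simp add: depw_def rel_def)
    then show ?thesis by simp
  qed
  have ee: "nths W (D \<inter> E1) = nths W E1"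
  proof (rule nths_cong, intro allI impI)
    fix i assume i: "i < length W"
    show "i \<in> D \<inter> E1 \<longleftrightarrow> i \<in> E1"
    proof
      assume "i \<in> E1"
      then have ri: "(depw W)\<^sup>*\<^sup>* (q + L) i" by (simp add: E1_def)
      have "q + L < length W"
      proof (cases "q + L = i")
        case True then show ?thesis using i by simp
      next
        case False then show ?thesis using reach_lt[OF ri] by simp
      qed
      then have "(depw W)\<^sup>*\<^sup>* q i" using qqL ri by (meson rtranclp_trans)
      then show "i \<in> D \<inter> E1" using \<open>i \<in> E1\<close> by (simp add: D_def)
    qed simp
  qed
  have nE1: "nths r E1 = []"
  proof (rule nths_none, intro allI impI)
    fix i assume "i < length r"
    then show "i \<notin> E1" using reach_le[of W "q + L" i] L_def by (auto simp: E1_def)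
  qed
  have shiftE: "j + L \<in> E1 \<longleftrightarrow> j \<in> DK" for j
    using reach_shift[of r RK q j] unfolding E1_def DK_def W1 L_def by simp
  have eb: "e = b"
  proof -
    have "e = nths W E1" using ee by (simp add: e_def)
    also have "\<dots> = nths r E1 @ nths RK {j. j + length r \<in> E1}" unfolding W1 by (rule nths_append)
    also have "\<dots> = b" using nE1 shiftE by (simp add: b_def L_def)
    finally show ?thesis .
  qed
  have cE1: "nths W (- E1) = r @ aK"
  proof -
    have "nths W (- E1) = nths r (- E1) @ nths RK {j. j + length r \<in> - E1}" unfolding W1 by (rule nths_append)
    moreover have "nths r (- E1) = r"
    proof (rule nths_all, intro allI impI)
      fix i assume "i < length r"
      then show "i \<in> - E1" using reach_le[of W "q + L" i] L_def by (auto simp: E1_def)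
    qed
    moreover have "{j. j + length r \<in> - E1} = - DK" using shiftE by (auto simp: L_def)
    ultimately show ?thesis by (simp add: aK_def)
  qed
  have gW1: "geq E W (a @ p @ b)" using s1(1) geq_app[OF geq_refl[of a] s2(1)] eb by (auto intro: geq_trans)
  have gW2: "geq E W (r @ a @ b)" using s3 cE1 aaK \<open>e = b\<close> ee by (simp add: e_def)
  have lens: "length W = length a + length p + length b" using s1(2) s2(2) eb by simp
  have rW: "red W" unfolding W_def using red_pow[OF rr cr] .
  have "wlen E (a @ p @ b) = length (a @ p @ b)"
    using wlen_cong[OF gW1] red_wlen[OF rW] lens by simp
  then have rapb: "red (a @ p @ b)" using minlen_red by simp
  then have ra: "red a" and rp: "red p" and rb: "red b" using red_append by blast+
  have lp: "length p = length r"
  proof -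
    have "length W = L + length RK" using W1 L_def by simp
    then show ?thesis using lens s4(2) aaK L_def by simp
  qed
  have gra: "geq E (r @ a) (a @ p)"
  proof -
    have "geq E ((r @ a) @ b) ((a @ p) @ b)" using gW1 gW2 by (auto intro: geq_trans geq_sym)
    then show ?thesis by (rule geq_rcancel)
  qed
  define P where "P = D - E1"
  have qP: "q \<in> P" using reach_le[of W "q + L" q] L0 by (auto simp: P_def D_def E1_def)
  have qW: "q < length W" using q lW L0 by (metis le_add1 less_le_trans mult_Suc L_def)
  have "conical E v0 p" unfolding conical_def
  proof
    show "start_gens E p \<subseteq> {v0}"
    proof
      fix v assume "v \<in> start_gens E p"
      then obtain u y w where uy: "p = u @ y # w" "fst y = v" "\<forall>z\<in>set u. \<not> rel v z"
        using sg_red[OF rp] by blast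
      obtain s where s: "s \<in> P" "s < length W" "W ! s = y" "\<forall>j. j < s \<and> j \<in> P \<longrightarrow> W ! j \<in> set u"
        using nths_split_elem[of W P u y w] uy(1) by (auto simp: p_def P_def)
      show "v \<in> {v0}"
      proof (cases "s = q")
        case True then show ?thesis using uy s Wq q by simp
      next
        case False
        have rs: "(depw W)\<^sup>*\<^sup>* q s" using s(1) by (simp add: P_def D_def)
        then obtain t where t: "(depw W)\<^sup>*\<^sup>* q t" "depw W t s" using False
          by (metis rtranclp.cases)
        have "\<not> (depw W)\<^sup>*\<^sup>* (q + L) t"
        proof
          assume "(depw W)\<^sup>*\<^sup>* (q + L) t"
          then have "(depw W)\<^sup>*\<^sup>* (q + L) s" using t(2) by (rule rtranclp.rtrancl_into_rtrancl)
          then show False using s(1) by (simp add: P_def E1_def)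
        qed
        then have "t \<in> P" using t(1) by (simp add: P_def D_def E1_def)
        moreover have "t < s" using t(2) by (simp add: depw_def)
        ultimately have "W ! t \<in> set u" using s(4) by blast
        then have "\<not> rel v (W ! t)" using uy(3) by blast
        moreover have "rel (fst (W ! t)) (W ! s)" using t(2) by (simp add: depw_def)
        ultimately show ?thesis using s(3) uy(2) symE by (auto simp: rel_def)
      qed
    qed
  next
    show "{v0} \<subseteq> start_gens E p"
    proof -
      obtain rest where "nths W P = W ! q # rest"
        using nths_head[OF qP qW] reach_le by (fastforce simp: P_def D_def)
      then have "p = [] @ W ! q # rest" by (simp add: p_def P_def)
      moreover have "fst (W ! q) = v0" using Wq q by simp
      ultimately have "\<exists>u y w. p = u @ y # w \<and> fst y = v0 \<and> (\<forall>z\<in>set u. \<not> rel v0 z)"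
        by (intro exI[of _ "[]"] exI[of _ "W ! q"] exI[of _ rest]) simp
      then have "v0 \<in> start_gens E p" using sg_red[OF rp, of v0] by simp
      then show ?thesis by blast
    qed
  qed
  moreover have "geq E (pow_word r (CARD('v) - 1)) (a @ b)" using s4(1) aaK by (simp add: RK_def K_def)
  moreover have "length a + length b = (CARD('v) - 1) * length r" using s4(2) aaK lRK by (simp add: K_def L_def)
  ultimately show ?thesis using gra ra rb rp lp by blast
qed

end

context raag begin

lemma apow: "geq E (r @ a) (a @ p) \<Longrightarrow> geq E (a @ pow_word p m) (pow_word r m @ a)"
proof (induction m)
  case 0 then show ?case by simp
next
  case (Suc m)
  have "a @ pow_word p (Suc m) = (a @ p) @ pow_word p m" by (simp add: pow_word_Suc)
  also have "geq E \<dots> ((r @ a) @ pow_word p m)" using geq_app[OF geq_sym[OF Suc.prems] geq_refl] .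
  also have "(r @ a) @ pow_word p m = r @ (a @ pow_word p m)" by simp
  also have "geq E \<dots> (r @ (pow_word r m @ a))" using geq_app[OF geq_refl Suc.IH[OF Suc.prems]] .
  also have "r @ (pow_word r m @ a) = pow_word r (Suc m) @ a" by (simp add: pow_word_Suc)
  finally show ?case .
qed

end

theorem proposition2p4:
  fixes E :: "'v::finite \<Rightarrow> 'v \<Rightarrow> bool" and g :: "'v word" and v0 :: 'v
  assumes "\<And>x y. E x y \<Longrightarrow> E y x"
    and "\<And>x. \<not> E x x"
    and "non_split E g"
    and "cyclically_reduced E g"
    and "v0 \<in> supp E g"
  shows "\<exists>p a b k. conical E v0 p
     \<and> geq E g (a @ p @ inv_word a)
     \<and> geq E g (inv_word b @ p @ b)
     \<and> k \<le> CARD('v) - 1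
     \<and> geq E (pow_word g k) (a @ b)
     \<and> wlen E (pow_word g k) = wlen E a + wlen E b
     \<and> (\<forall>n\<ge>CARD('v). geq E (pow_word g n) (a @ pow_word p (n - k) @ b)
          \<and> wlen E (pow_word g n) = wlen E a + (n - k) * wlen E p + wlen E b)"
proof -
  interpret raag E using assms(1) by unfold_locales
  obtain r where rr: "red r" and gr: "geq E g r" and lr: "length r = wlen E g" using exists_red by blast
  have cr: "\<forall>c. wlen E r \<le> wlen E (c @ r @ inv_word c)"
  proof
    fix c
    have "wlen E g \<le> wlen E (c @ g @ inv_word c)" using assms(4) by (simp add: cyclically_reduced_def)
    moreover have "wlen E (c @ g @ inv_word c) = wlen E (c @ r @ inv_word c)" using geq_ctx[OF gr] by (rule wlen_cong)
    moreover have "wlen E g = wlen E r" using gr by (rule wlen_cong)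
    ultimately show "wlen E r \<le> wlen E (c @ r @ inv_word c)" by simp
  qed
  have sp: "supp E g = fst ` set r" using supp_red[OF rr gr] .
  have conn: "connected_span E (fst ` set r)" using assms(3) sp by (simp add: non_split_def)
  have v0: "v0 \<in> fst ` set r" using assms(5) sp by simp
  define K where "K = CARD('v) - 1"
  define L where "L = length r"
  obtain p a b where con: "conical E v0 p" and gra: "geq E (r @ a) (a @ p)"
    and gK: "geq E (pow_word r K) (a @ b)" and lab: "length a + length b = K * L"
    and ra: "red a" and rb: "red b" and rp: "red p" and lp: "length p = L"
    using main[OF rr cr conn v0] unfolding K_def L_def by blast
  have wa: "wlen E a = length a" and wb: "wlen E b = length b" and wp: "wlen E p = L"
    using red_wlen ra rb rp lp by auto
  have rn: "wlen E (pow_word g n) = n * L" for n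
    using wlen_cong[OF geq_pow[OF gr]] red_wlen[OF red_pow[OF rr cr]] by (simp add: L_def)
  have g1: "geq E g (a @ p @ inv_word a)"
  proof -
    have "geq E (r @ (a @ inv_word a) @ []) (r @ [] @ [])" by (rule geq_ctx[OF geq_inv_r])
    then have "geq E r ((r @ a) @ inv_word a)" by (simp add: geq_sym)
    also have "geq E \<dots> ((a @ p) @ inv_word a)" using geq_app[OF gra geq_refl] .
    finally show ?thesis using gr by (auto intro: geq_trans)
  qed
  have g2: "geq E g (inv_word b @ p @ b)"
  proof -
    have "geq E (a @ p @ b) ((r @ a) @ b)" using geq_app[OF geq_sym[OF gra] geq_refl] by simp
    also have "geq E ((r @ a) @ b) (r @ pow_word r K)" using geq_app[OF geq_refl geq_sym[OF gK]] by simp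
    also have "r @ pow_word r K = pow_word r K @ r" by (simp add: pow_word_Suc[symmetric] pow_word_Suc')
    also have "geq E \<dots> (a @ b @ r)" using geq_app[OF gK geq_refl] by simp
    finally have "geq E (a @ (p @ b)) (a @ (b @ r))" by simp
    then have pb: "geq E (p @ b) (b @ r)" by (rule geq_lcancel)
    have "geq E (inv_word b @ (p @ b)) (inv_word b @ (b @ r))" using geq_app[OF geq_refl pb] .
    also have "inv_word b @ (b @ r) = (inv_word b @ b) @ r" by simp
    also have "geq E \<dots> ([] @ r)" using geq_app[OF geq_inv_l geq_refl] .
    finally have "geq E (inv_word b @ p @ b) r" by simp
    then show ?thesis using gr by (auto intro: geq_trans geq_sym)
  qed
  have g3: "geq E (pow_word g K) (a @ b)" using geq_pow[OF gr] gK by (auto intro: geq_trans)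
  have w3: "wlen E (pow_word g K) = wlen E a + wlen E b" using rn[of K] wa wb lab by simp
  have g4: "geq E (pow_word g n) (a @ pow_word p (n - K) @ b) \<and>
      wlen E (pow_word g n) = wlen E a + (n - K) * wlen E p + wlen E b" if n: "n \<ge> CARD('v)" for n
  proof
    have nK: "n = (n - K) + K" using n by (simp add: K_def)
    have "geq E (a @ pow_word p (n - K) @ b) ((pow_word r (n - K) @ a) @ b)"
      using geq_app[OF apow[OF gra] geq_refl] by simp
    also have "geq E \<dots> (pow_word r (n - K) @ pow_word r K)" using geq_app[OF geq_refl geq_sym[OF gK]] by simp
    also have "pow_word r (n - K) @ pow_word r K = pow_word r n" using nK pow_word_add by metis
    finally have "geq E (a @ pow_word p (n - K) @ b) (pow_word r n)" .
    then show "geq E (pow_word g n) (a @ pow_word p (n - K) @ b)"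
      using geq_pow[OF gr] by (auto intro: geq_trans geq_sym)
    have "n * L = (n - K) * L + K * L" using nK by (metis add_mult_distrib)
    then show "wlen E (pow_word g n) = wlen E a + (n - K) * wlen E p + wlen E b"
      using rn[of n] wa wb wp lab by simp
  qed
  show ?thesis
    by (rule exI[of _ p], rule exI[of _ a], rule exI[of _ b], rule exI[of _ K])
       (use con g1 g2 g3 w3 g4 in \<open>simp add: K_def\<close>)
qed



end
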